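(* For all $m\geq 2$: $s_{1,m}(122,213)=1$, $s_{2,m}(122,213)=m+1$, and for all $n\geq 3$, \[ s_{n,m}(122,213)=m\,s_{n-1,m}(122,213)+s_{n-2,m}(122,213). \]
   Context: $[n]_m=\{1^m,\ldots,n^m\}$; a permutation of $[n]_m$ is a sequence of length $nm$ in which each element of $[n]$ appears exactly $m$ times. A sequence avoids a pattern $\pi$ if it has no subsequence order-isomorphic to $\pi$ (same relative order and same equalities among entries). $s_{n,m}(\Pi)$ is the number of permutations of $[n]_m$ avoiding all patterns in $\Pi$. *)

theory Defs
  imports Main "HOL-Library.Sublist"
begin

definition order_iso :: "nat list \<Rightarrow> nat list \<Rightarrow> bool" where
  "order_iso s p \<longleftrightarrow> length s = length p \<and>
     (\<forall>i < length s. \<forall>j < length s. (s ! i < s ! j \<longleftrightarrow> p ! i < p ! j))"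

definition contains :: "nat list \<Rightarrow> nat list \<Rightarrow> bool" where
  "contains w p \<longleftrightarrow> (\<exists>s. subseq s w \<and> order_iso s p)"

definition avoids_all :: "nat list \<Rightarrow> nat list set \<Rightarrow> bool" where
  "avoids_all w P \<longleftrightarrow> (\<forall>p\<in>P. \<not> contains w p)"

definition multiperms :: "nat \<Rightarrow> nat \<Rightarrow> nat list set" where
  "multiperms n m = {w. length w = n * m \<and> set w \<subseteq> {1..n} \<and>
                        (\<forall>i\<in>{1..n}. count_list w i = m)}"

definition s_count :: "nat \<Rightarrow> nat \<Rightarrow> nat list set \<Rightarrow> nat" where
  "s_count n m P = card {w \<in> multiperms n m. avoids_all w P}"

end

theory Submission
  imports Defs
begin

definition av :: "nat list \<Rightarrow> bool" where
  "av w \<longleftrightarrow> (\<forall>a b c. subseq [a,b,c] w \<longrightarrow> \<not>(a<b \<and> b=c) \<and> \<not>(b<a \<and> a<c))"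

lemma all3: "(\<forall>i<(3::nat). P i) \<longleftrightarrow> P 0 \<and> P 1 \<and> P 2"
  by (auto simp: numeral_3_eq_3 numeral_2_eq_2 less_Suc_eq)

lemma order_iso3:
  "order_iso s [p,q,r] \<longleftrightarrow> (\<exists>a b c. s = [a,b,c] \<and> (a<b \<longleftrightarrow> p<q) \<and> (a<c \<longleftrightarrow> p<r)
     \<and> (b<a \<longleftrightarrow> q<p) \<and> (b<c \<longleftrightarrow> q<r) \<and> (c<a \<longleftrightarrow> r<p) \<and> (c<b \<longleftrightarrow> r<q))"
proof -
  have "order_iso s [p,q,r] \<longleftrightarrow> length s = 3 \<and> (\<forall>i<3. \<forall>j<3. (s ! i < s ! j \<longleftrightarrow> [p,q,r] ! i < [p,q,r] ! j))"
    unfolding order_iso_def by (rule conj_cong) (simp_all add: numeral_3_eq_3)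
  also have "\<dots> \<longleftrightarrow> (\<exists>a b c. s = [a,b,c] \<and> (\<forall>i<3. \<forall>j<3. ([a,b,c] ! i < [a,b,c] ! j \<longleftrightarrow> [p,q,r] ! i < [p,q,r] ! j)))"
  proof
    assume h: "length s = 3 \<and> (\<forall>i<3. \<forall>j<3. (s ! i < s ! j \<longleftrightarrow> [p,q,r] ! i < [p,q,r] ! j))"
    then have "length s = Suc (Suc (Suc 0))" by simp
    then obtain a b c where s': "s = [a,b,c]" by (auto simp: length_Suc_conv)
    from h have h2: "\<forall>i<3. \<forall>j<3. ([a,b,c] ! i < [a,b,c] ! j \<longleftrightarrow> [p,q,r] ! i < [p,q,r] ! j)"
      unfolding s' by (rule conjunct2)
    show "\<exists>a b c. s = [a,b,c] \<and> (\<forall>i<3. \<forall>j<3. ([a,b,c] ! i < [a,b,c] ! j \<longleftrightarrow> [p,q,r] ! i < [p,q,r] ! j))"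
      by (intro exI[of _ a] exI[of _ b] exI[of _ c] conjI s' h2)
  next
    assume "\<exists>a b c. s = [a,b,c] \<and> (\<forall>i<3. \<forall>j<3. ([a,b,c] ! i < [a,b,c] ! j \<longleftrightarrow> [p,q,r] ! i < [p,q,r] ! j))"
    then obtain a b c where s': "s = [a,b,c]"
      and h: "\<forall>i<3. \<forall>j<3. ([a,b,c] ! i < [a,b,c] ! j \<longleftrightarrow> [p,q,r] ! i < [p,q,r] ! j)" by blast
    have "length s = 3" using s' by simp
    moreover have "\<forall>i<3. \<forall>j<3. (s ! i < s ! j \<longleftrightarrow> [p,q,r] ! i < [p,q,r] ! j)"
      unfolding s' by (rule h)
    ultimately show "length s = 3 \<and> (\<forall>i<3. \<forall>j<3. (s ! i < s ! j \<longleftrightarrow> [p,q,r] ! i < [p,q,r] ! j))" by blast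
  qed
  also have "\<dots> \<longleftrightarrow> (\<exists>a b c. s = [a,b,c] \<and> (a<b \<longleftrightarrow> p<q) \<and> (a<c \<longleftrightarrow> p<r)
     \<and> (b<a \<longleftrightarrow> q<p) \<and> (b<c \<longleftrightarrow> q<r) \<and> (c<a \<longleftrightarrow> r<p) \<and> (c<b \<longleftrightarrow> r<q))"
    unfolding all3 by simp
  finally show ?thesis .
qed

lemma iso122: "order_iso s [1,2,2] \<longleftrightarrow> (\<exists>a b. s = [a,b,b] \<and> a < b)"
proof
  assume "order_iso s [1,2,2]"
  then have "\<exists>a b c. s = [a,b,c] \<and> a<b \<and> \<not> b<c \<and> \<not> c<b" unfolding order_iso3 by auto
  then show "\<exists>a b. s = [a,b,b] \<and> a < b" by (metis linorder_neqE_nat)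
next
  assume "\<exists>a b. s = [a,b,b] \<and> a < b"
  then obtain a b where "s = [a,b,b]" "a < b" by blast
  then show "order_iso s [1,2,2]" unfolding order_iso3
    by (intro exI[of _ a] exI[of _ b] exI[of _ b]) auto
qed

lemma iso213: "order_iso s [2,1,3] \<longleftrightarrow> (\<exists>a b c. s = [a,b,c] \<and> b < a \<and> a < c)"
proof
  assume "order_iso s [2,1,3]"
  then show "\<exists>a b c. s = [a,b,c] \<and> b < a \<and> a < c" unfolding order_iso3 by auto
next
  assume "\<exists>a b c. s = [a,b,c] \<and> b < a \<and> a < c"
  then obtain a b c where "s = [a,b,c]" "b < a" "a < c" by blast
  then show "order_iso s [2,1,3]" unfolding order_iso3
    by (intro exI[of _ a] exI[of _ b] exI[of _ c]) auto
qed

lemma avoids_av: "avoids_all w {[1,2,2],[2,1,3]} \<longleftrightarrow> av w"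
proof -
  have 1: "contains w [1,2,2] \<longleftrightarrow> (\<exists>a b c. subseq [a,b,c] w \<and> a<b \<and> b=c)"
    unfolding contains_def iso122 by blast
  have 2: "contains w [2,1,3] \<longleftrightarrow> (\<exists>a b c. subseq [a,b,c] w \<and> b<a \<and> a<c)"
    unfolding contains_def iso213 by blast
  show ?thesis unfolding avoids_all_def av_def using 1 2 by blast
qed

lemma subseq_set: "subseq xs ys \<Longrightarrow> set xs \<subseteq> set ys"
proof
  fix x assume "subseq xs ys" "x \<in> set xs"
  then obtain y where "y \<in> set ys" "x = y" by (rule list_emb_set)
  then show "x \<in> set ys" by simp
qed

lemma av_D: "av w \<Longrightarrow> subseq [a,b,c] w \<Longrightarrow> \<not>(a<b \<and> b=c) \<and> \<not>(b<a \<and> a<c)"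
  unfolding av_def by blast

lemma av_subseq: "subseq v w \<Longrightarrow> av w \<Longrightarrow> av v"
proof -
  assume sv: "subseq v w" and aw: "av w"
  show "av v" unfolding av_def
  proof (intro allI impI)
    fix a b c assume "subseq [a,b,c] v"
    then have "subseq [a,b,c] w" using sv by (rule subseq_order.trans)
    then show "\<not>(a<b \<and> b=c) \<and> \<not>(b<a \<and> a<c)" using aw unfolding av_def by blast
  qed
qed

lemma av_Cons: "av (h#w) \<longleftrightarrow> av w \<and> (\<forall>b c. subseq [b,c] w \<longrightarrow> \<not>(h<b \<and> b=c) \<and> \<not>(b<h \<and> h<c))"
proof
  assume a: "av (h#w)"
  have "av w" using av_subseq[OF _ a] by (simp add: list_emb.list_emb_Cons)
  moreover have "\<forall>b c. subseq [b,c] w \<longrightarrow> \<not>(h<b \<and> b=c) \<and> \<not>(b<h \<and> h<c)"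
  proof (intro allI impI)
    fix b c assume "subseq [b,c] w"
    then have "subseq [h,b,c] (h#w)" by simp
    then show "\<not>(h<b \<and> b=c) \<and> \<not>(b<h \<and> h<c)" using a unfolding av_def by blast
  qed
  ultimately show "av w \<and> (\<forall>b c. subseq [b,c] w \<longrightarrow> \<not>(h<b \<and> b=c) \<and> \<not>(b<h \<and> h<c))" by blast
next
  assume a: "av w \<and> (\<forall>b c. subseq [b,c] w \<longrightarrow> \<not>(h<b \<and> b=c) \<and> \<not>(b<h \<and> h<c))"
  show "av (h#w)" unfolding av_def
  proof (intro allI impI)
    fix x b c assume s: "subseq [x,b,c] (h#w)"
    show "\<not>(x<b \<and> b=c) \<and> \<not>(b<x \<and> x<c)"
    proof (cases "x = h")
      case True
      then have "subseq [b,c] w" using s by simp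
      then show ?thesis using a True by blast
    next
      case False
      then have "subseq [x,b,c] w" using s by simp
      then show ?thesis using a unfolding av_def by blast
    qed
  qed
qed

lemma sorted_if_pairs: "(\<forall>a b. subseq [a,b] x \<longrightarrow> a \<le> b) \<Longrightarrow> sorted (x::nat list)"
proof (induction x)
  case Nil then show ?case by simp
next
  case (Cons a x)
  have "\<forall>a b. subseq [a,b] x \<longrightarrow> a \<le> b"
    using Cons.prems by (meson list_emb.list_emb_Cons)
  moreover have "\<forall>b\<in>set x. a \<le> b"
    using Cons.prems by (simp add: subseq_singleton_left)
  ultimately show ?case using Cons.IH by simp
qed

lemma count_replicate: "count_list (replicate k a) x = (if x = a then k else 0)"
  by (induction k) auto

lemma count2_subseq: "count_list xs x \<ge> 2 \<Longrightarrow> subseq [x,x] xs"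
proof -
  assume c: "count_list xs x \<ge> 2"
  then have "x \<in> set xs" by (metis count_list_0_iff not_numeral_le_zero)
  then obtain ys zs where xs: "xs = ys @ x # zs" and "x \<notin> set ys" by (meson split_list_first)
  then have "count_list ys x = 0" by (simp add: count_list_0_iff)
  then have "count_list zs x \<ge> 1" using c xs by simp
  then have "x \<in> set zs" by (metis count_list_0_iff not_one_le_zero)
  then have "subseq [x] zs" by (simp add: subseq_singleton_left)
  then have "subseq [x,x] (x#zs)" by simp
  then show ?thesis using xs by (simp add: subseq_drop_many)
qed

lemma subseq_nn: "n \<notin> set x \<Longrightarrow> n \<notin> set y \<Longrightarrow> \<not> subseq [n,n] (x @ n # y)"
proof
  assume h: "n \<notin> set x" "n \<notin> set y" "subseq [n,n] (x @ n # y)"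
  then have "subseq (filter (\<lambda>v. v = n) [n,n]) (filter (\<lambda>v. v = n) (x @ n # y))"
    using subseq_filter by blast
  moreover have "filter (\<lambda>v. v = n) x = []" "filter (\<lambda>v. v = n) y = []" using h(1,2)
    by (auto simp: filter_empty_conv)
  ultimately show False by simp
qed

lemma subseq_last_n: "subseq [b,n] (x @ n # y) \<Longrightarrow> n \<notin> set y \<Longrightarrow> b \<noteq> n \<Longrightarrow> b \<in> set x"
proof -
  assume s: "subseq [b,n] (x @ n # y)" and ny: "n \<notin> set y" and bn: "b \<noteq> n"
  obtain xs1 xs2 where e: "[b,n] = xs1 @ xs2" "subseq xs1 x" "subseq xs2 (n#y)"
    using s by (meson subseq_appendE)
  show "b \<in> set x"
  proof (cases xs1)
    case Nil
    then have "subseq [b,n] (n#y)" using e by simp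
    then have "subseq [b,n] y" using bn by simp
    then have "set [b,n] \<subseteq> set y" by (rule subseq_set)
    then have "n \<in> set y" by simp
    then show ?thesis using ny by simp
  next
    case (Cons z zs)
    then have "z = b" using e(1) by simp
    then have "subseq (b # zs) x" using e(2) Cons by simp
    then have "set (b # zs) \<subseteq> set x" by (rule subseq_set)
    then show ?thesis by simp
  qed
qed

lemma filter_not_n: "n \<notin> set x \<Longrightarrow> n \<notin> set y \<Longrightarrow> filter (\<lambda>v. v \<noteq> n) (x @ n # y) = x @ y"
proof -
  assume "n \<notin> set x" "n \<notin> set y"
  then have "filter (\<lambda>v. v \<noteq> n) x = x" "filter (\<lambda>v. v \<noteq> n) y = y"
    by (auto simp: filter_id_conv)
  then show ?thesis by simp
qed

lemma av_ins:
  assumes "sorted x" "\<forall>v\<in>set x \<union> set y. v < n" "av (x @ y)"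
  shows "av (x @ n # y)"
  using assms
proof (induction x)
  case Nil
  have ay: "av y" using Nil.prems(3) by simp
  have "\<forall>b c. subseq [b,c] y \<longrightarrow> \<not>(n<b \<and> b=c) \<and> \<not>(b<n \<and> n<c)"
  proof (intro allI impI)
    fix b c assume "subseq [b,c] y"
    then have "set [b,c] \<subseteq> set y" by (rule subseq_set)
    then have "b \<in> set y" "c \<in> set y" by simp_all
    then have "b < n" "c < n" using Nil.prems(2) by auto
    then show "\<not>(n<b \<and> b=c) \<and> \<not>(b<n \<and> n<c)" by simp
  qed
  then show ?case using ay unfolding append_Nil av_Cons by blast
next
  case (Cons a x)
  have c0: "av (x @ y) \<and> (\<forall>b c. subseq [b,c] (x@y) \<longrightarrow> \<not>(a<b \<and> b=c) \<and> \<not>(b<a \<and> a<c))"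
    using Cons.prems(3) unfolding append_Cons av_Cons .
  then have avx: "av (x @ y)" and c: "\<forall>b c. subseq [b,c] (x@y) \<longrightarrow> \<not>(a<b \<and> b=c) \<and> \<not>(b<a \<and> a<c)"
    by blast+
  have sx: "sorted x" using Cons.prems(1) by simp
  have lx: "\<forall>v\<in>set x \<union> set y. v < n" using Cons.prems(2) by simp
  have IH: "av (x @ n # y)" using Cons.IH[OF sx lx avx] .
  have nx: "n \<notin> set x" "n \<notin> set y" using lx by fastforce+
  have an: "a < n" using Cons.prems(2) by simp
  have "\<forall>b c. subseq [b,c] (x @ n # y) \<longrightarrow> \<not>(a<b \<and> b=c) \<and> \<not>(b<a \<and> a<c)"
  proof (intro allI impI)
    fix b c assume s: "subseq [b,c] (x @ n # y)"
    show "\<not>(a<b \<and> b=c) \<and> \<not>(b<a \<and> a<c)"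
    proof (cases "b = n")
      case True
      have "b \<noteq> c"
      proof
        assume "b = c"
        then have bc: "c = n" using True by simp
        have "subseq [n,n] (x @ n # y)" using s by (simp only: True bc)
        then show False using subseq_nn[OF nx] by blast
      qed
      moreover have "\<not> b < a" using True an by simp
      ultimately show ?thesis by blast
    next
      case bn: False
      show ?thesis
      proof (cases "c = n")
        case True
        then have "subseq [b,n] (x @ n # y)" using s by (simp only:)
        then have "b \<in> set x" by (rule subseq_last_n[OF _ nx(2) bn])
        then have "a \<le> b" using Cons.prems(1) by simp
        then show ?thesis using True bn by simp
      next
        case False
        have "subseq (filter (\<lambda>v. v \<noteq> n) [b,c]) (filter (\<lambda>v. v \<noteq> n) (x @ n # y))"
          using s by (rule subseq_filter)
        moreover have "filter (\<lambda>v. v \<noteq> n) [b,c] = [b,c]" using bn False by simp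
        ultimately have "subseq [b,c] (x@y)" using filter_not_n[OF nx] by simp
        then show ?thesis using c by blast
      qed
    qed
  qed
  then show ?case using IH unfolding append_Cons av_Cons by blast
qed

lemma av_rep:
  assumes "\<forall>v\<in>set t. v \<le> n" "av t"
  shows "av (replicate k n @ t)"
proof (induction k)
  case 0 then show ?case using assms by simp
next
  case (Suc k)
  have le: "\<forall>v\<in>set (replicate k n @ t). v \<le> n" using assms(1) by auto
  have "\<forall>b c. subseq [b,c] (replicate k n @ t) \<longrightarrow> \<not>(n<b \<and> b=c) \<and> \<not>(b<n \<and> n<c)"
  proof (intro allI impI)
    fix b c assume "subseq [b,c] (replicate k n @ t)"
    then have "set [b,c] \<subseteq> set (replicate k n @ t)" by (rule subseq_set)
    then have "b \<in> set (replicate k n @ t)" "c \<in> set (replicate k n @ t)" by simp_all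
    then have "b \<le> n" "c \<le> n" using le by blast+
    then show "\<not>(n<b \<and> b=c) \<and> \<not>(b<n \<and> n<c)" by simp
  qed
  then show ?case using Suc unfolding replicate_Suc append_Cons av_Cons by blast
qed

definition A :: "nat \<Rightarrow> nat \<Rightarrow> nat list set" where
  "A n m = {w \<in> multiperms n m. av w}"

lemma char_intro:
  assumes n: "n \<ge> 1" and m: "m \<ge> 1" and u: "x @ y \<in> A (n-1) m" and so: "sorted x"
  shows "replicate (m-1) n @ x @ n # y \<in> A n m"
proof -
  have lu: "length (x@y) = (n-1)*m" and su: "set (x@y) \<subseteq> {1..n-1}"
    and cu: "\<forall>i\<in>{1..n-1}. count_list (x@y) i = m" and au: "av (x@y)"
    using u by (auto simp: A_def multiperms_def)
  have lt: "\<forall>v\<in>set x \<union> set y. v < n"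
  proof
    fix v assume "v \<in> set x \<union> set y"
    then have "v \<le> n-1" using su by auto
    then show "v < n" using n by simp
  qed
  then have nx: "n \<notin> set x" "n \<notin> set y" by auto
  have "length (replicate (m-1) n @ x @ n # y) = (m-1) + (n-1)*m + 1" using lu by simp
  also have "\<dots> = n * m" using n m by (cases n) auto
  finally have "length (replicate (m-1) n @ x @ n # y) = n * m" .
  moreover have "set (replicate (m-1) n @ x @ n # y) \<subseteq> {1..n}"
  proof -
    have "{1..n-1} \<subseteq> {1..n::nat}" by auto
    moreover have "set x \<subseteq> set (x@y)" "set y \<subseteq> set (x@y)" by auto
    ultimately have "set x \<subseteq> {1..n}" "set y \<subseteq> {1..n}" using su by (meson order_trans)+
    then show ?thesis using n by auto
  qed
  moreover have "\<forall>i\<in>{1..n}. count_list (replicate (m-1) n @ x @ n # y) i = m"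
  proof
    fix i assume i: "i \<in> {1..n}"
    show "count_list (replicate (m-1) n @ x @ n # y) i = m"
    proof (cases "i = n")
      case True
      then show ?thesis using nx m by (simp add: count_replicate count_list_0_iff)
    next
      case False
      then have "i \<in> {1..n-1}" using i by auto
      then show ?thesis using cu False by (simp add: count_replicate)
    qed
  qed
  moreover have "av (replicate (m-1) n @ x @ n # y)"
  proof (rule av_rep)
    show "av (x @ n # y)" using av_ins[OF so lt au] .
    show "\<forall>v\<in>set (x @ n # y). v \<le> n" using lt less_imp_le by auto
  qed
  ultimately show ?thesis unfolding A_def multiperms_def by blast
qed

lemma count1_split: "count_list t n = 1 \<Longrightarrow> \<exists>x y. t = x @ n # y \<and> n \<notin> set x \<and> n \<notin> set y"
proof -
  assume c: "count_list t n = 1"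
  then have "n \<in> set t" by (metis count_list_0_iff zero_neq_one)
  then obtain x y where t: "t = x @ n # y" and "n \<notin> set x" by (meson split_list_first)
  moreover have "count_list x n = 0" using \<open>n \<notin> set x\<close> by (simp add: count_list_0_iff)
  ultimately have "count_list y n = 0" using c by simp
  then show ?thesis using t \<open>n \<notin> set x\<close> by (metis count_list_0_iff)
qed

lemma char_dest:
  assumes n: "n \<ge> 1" and m: "m \<ge> 2" and w: "w \<in> A n m"
  shows "\<exists>x y. w = replicate (m-1) n @ x @ n # y \<and> x @ y \<in> A (n-1) m \<and> sorted x"
proof -
  have lw: "length w = n*m" and sw: "set w \<subseteq> {1..n}"
    and cw: "\<forall>i\<in>{1..n}. count_list w i = m" and aw: "av w"
    using w by (auto simp: A_def multiperms_def)
  define j where "j = length (takeWhile (\<lambda>v. v = n) w)"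
  define t where "t = dropWhile (\<lambda>v. v = n) w"
  have tw: "takeWhile (\<lambda>v. v = n) w = replicate j n"
  proof -
    have "\<forall>v\<in>set (takeWhile (\<lambda>v. v = n) w). v = n" by (auto dest: set_takeWhileD)
    then show ?thesis unfolding j_def by (simp add: replicate_length_same)
  qed
  have wj: "w = replicate j n @ t" unfolding t_def using tw by (metis takeWhile_dropWhile_id)
  have cn: "count_list w n = m" using cw n by auto
  then have cjt: "j + count_list t n = m" using wj by (simp add: count_replicate)
  have jm: "j \<ge> m - 1"
  proof (rule ccontr)
    assume "\<not> j \<ge> m - 1"
    then have c2: "count_list t n \<ge> 2" using cjt by simp
    then have "t \<noteq> []" by auto
    then obtain h t' where t: "t = h # t'" by (cases t) auto
    have "h \<noteq> n" using hd_dropWhile[of "\<lambda>v. v = n" w] \<open>t \<noteq> []\<close> t unfolding t_def by simp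
    moreover have "h \<in> set w" using wj t by simp
    ultimately have hn: "h < n" using sw by fastforce
    have "count_list t' n \<ge> 2" using c2 t \<open>h \<noteq> n\<close> by simp
    then have "subseq [n,n] t'" by (rule count2_subseq)
    then have "subseq [h,n,n] t" using t by simp
    then have "subseq [h,n,n] w" unfolding wj by (rule subseq_drop_many)
    then have "\<not>(h<n \<and> n=n)" using av_D[OF aw] by blast
    then show False using hn by simp
  qed
  define t2 where "t2 = replicate (j - (m-1)) n @ t"
  have "replicate j n = replicate (m-1) n @ replicate (j - (m-1)) n"
    using replicate_add[of "m-1" "j-(m-1)" n] jm by simp
  then have wt2: "w = replicate (m-1) n @ t2" using wj unfolding t2_def by simp
  have c1: "count_list t2 n = 1" using cjt jm m unfolding t2_def by (simp add: count_replicate)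
  obtain x y where t2: "t2 = x @ n # y" and nx: "n \<notin> set x" "n \<notin> set y"
    using count1_split[OF c1] by auto
  have wxy: "w = replicate (m-1) n @ x @ n # y" using wt2 t2 by simp
  have "subseq (x @ y) w"
  proof -
    have "subseq y (n # y)" by (rule list_emb.list_emb_Cons[OF subseq_order.order_refl])
    then have "subseq (x @ y) (x @ n # y)" by (rule list_emb_append_mono[OF subseq_order.order_refl])
    then show ?thesis unfolding wxy by (rule subseq_drop_many)
  qed
  then have au: "av (x @ y)" by (rule av_subseq[OF _ aw])
  have su: "set (x @ y) \<subseteq> {1..n-1}"
  proof
    fix v assume v: "v \<in> set (x @ y)"
    then have "v \<in> set w" using wxy by auto
    then have "v \<in> {1..n}" using sw by blast
    moreover have "v \<noteq> n" using v nx by auto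
    ultimately show "v \<in> {1..n-1}" by auto
  qed
  have cu: "\<forall>i\<in>{1..n-1}. count_list (x@y) i = m"
  proof
    fix i assume i: "i \<in> {1..n-1}"
    then have ni: "i \<noteq> n" and "i \<in> {1..n}" by auto
    then have "count_list w i = m" using cw by blast
    then show "count_list (x@y) i = m" using ni unfolding wxy by (simp add: count_replicate)
  qed
  have lu: "length (x @ y) = (n-1)*m"
  proof -
    have "length w = (m-1) + length (x@y) + 1" using wxy by simp
    then show ?thesis using lw m by (simp add: diff_mult_distrib)
  qed
  have so: "sorted x"
  proof (rule sorted_if_pairs, intro allI impI)
    fix a b assume s: "subseq [a,b] x"
    show "a \<le> b"
    proof (rule ccontr)
      assume ba: "\<not> a \<le> b"
      have "set [a,b] \<subseteq> set x" using s by (rule subseq_set)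
      then have "a \<in> set x" by simp
      then have "a \<in> set (x @ y)" by simp
      then have an: "a < n" using su by fastforce
      have "subseq ([a,b] @ [n]) (x @ [n])" by (rule list_emb_append_mono[OF s subseq_order.order_refl])
      then have "subseq [a,b,n] ((x @ [n]) @ y)" using subseq_rev_drop_many by fastforce
      then have "subseq [a,b,n] (x @ n # y)" by simp
      then have "subseq [a,b,n] w" unfolding wxy by (rule subseq_drop_many)
      then have "\<not>(b<a \<and> a<n)" using av_D[OF aw] by blast
      then show False using an ba by simp
    qed
  qed
  have "x @ y \<in> A (n-1) m" using au su cu lu unfolding A_def multiperms_def by blast
  then show ?thesis using wxy so by blast
qed

definition K :: "nat list \<Rightarrow> nat set" where
  "K u = {k. k \<le> length u \<and> sorted (take k u)}"

lemma not_sorted_rep: "m' \<ge> 1 \<Longrightarrow> b \<in> set z \<Longrightarrow> b < p \<Longrightarrow> \<not> sorted (replicate m' p @ (z::nat list))"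
  by (auto simp: sorted_append not_le)

lemma K_val:
  assumes p: "p \<ge> 1" and m: "m \<ge> 2" and u: "u \<in> A p m"
  shows "K u = {..<m} \<union> (if take m u = replicate m p then {m} else {})"
proof -
  obtain x y where ux: "u = replicate (m-1) p @ x @ p # y" and xy: "x @ y \<in> A (p-1) m"
    using char_dest[OF p m u] by blast
  obtain m' where m': "m = Suc m'" "m' \<ge> 1" using m by (cases m) auto
  have sxy: "set (x @ y) \<subseteq> {1..p-1}" using xy by (simp add: A_def multiperms_def)
  have lt: "\<forall>v\<in>set x \<union> set y. v < p"
  proof
    fix v assume "v \<in> set x \<union> set y"
    then have "v \<in> {1..p-1}" using sxy by auto
    then show "v < p" using p by auto
  qed
  have ux': "u = replicate m' p @ x @ p # y" using ux m' by simp
  have tk: "take m u = replicate m p \<longleftrightarrow> x = []"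
  proof (cases x)
    case Nil
    then show ?thesis using ux' m' by (simp add: replicate_append_same)
  next
    case (Cons a x')
    have "take m u = replicate m' p @ [a]" using ux' m' Cons by simp
    moreover have "a \<noteq> p" using lt Cons by auto
    moreover have "replicate m p = replicate m' p @ [p]" using m' by (simp add: replicate_append_same)
    ultimately show ?thesis using Cons by simp
  qed
  have "\<forall>k. k \<in> K u \<longleftrightarrow> k < m \<or> (k = m \<and> x = [])"
  proof
    fix k
    show "k \<in> K u \<longleftrightarrow> k < m \<or> (k = m \<and> x = [])"
    proof (cases "k < m")
      case True
      then have "take k u = replicate k p" using ux' m' by (simp add: min_def)
      moreover have "k \<le> length u" using True ux' m' by simp
      ultimately show ?thesis using True by (simp add: K_def)
    next
      case False
      show ?thesis
      proof (cases "k = m \<and> x = []")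
        case True
        then have "take k u = replicate m p" using tk by simp
        moreover have "k \<le> length u" using True ux' m' by simp
        ultimately show ?thesis using True by (simp add: K_def)
      next
        case nt: False
        have "\<not> (k \<le> length u \<and> sorted (take k u))"
        proof
          assume kk: "k \<le> length u \<and> sorted (take k u)"
          have tku: "take k u = replicate m' p @ take (k - m') (x @ p # y)"
            using ux' False m' by simp
          have "\<exists>b \<in> set (take (k - m') (x @ p # y)). b < p"
          proof (cases x)
            case (Cons a x')
            then have "a \<in> set (take (k - m') (x @ p # y))" using False m' by (cases "k - m'") auto
            then show ?thesis using lt Cons by auto
          next
            case Nil
            then have km: "k > m" using nt False by auto
            then have "y \<noteq> []" using kk ux' Nil m' by auto
            then obtain b y' where y: "y = b # y'" by (cases y) auto
            have "k - m' = Suc (Suc (k - m' - 2))" using km m' by simp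
            then have "b \<in> set (take (k - m') (x @ p # y))" using Nil y by simp
            then show ?thesis using lt y by auto
          qed
          then obtain b where "b \<in> set (take (k - m') (x @ p # y))" "b < p" by blast
          then have "\<not> sorted (take k u)" using tku not_sorted_rep[OF m'(2)] by simp
          then show False using kk by simp
        qed
        then show ?thesis using nt False unfolding K_def by blast
      qed
    qed
  qed
  then show ?thesis using tk by auto
qed


lemma A_finite: "finite (A n m)"
proof (rule finite_subset)
  show "A n m \<subseteq> {w. set w \<subseteq> {1..n} \<and> length w = n*m}"
    unfolding A_def multiperms_def by blast
  show "finite {w. set w \<subseteq> {1..n} \<and> length w = n*m}"
    by (rule finite_lists_length_eq) simp
qed

lemma K_finite: "finite (K u)"
proof (rule finite_subset)
  show "K u \<subseteq> {..length u}" unfolding K_def by auto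
qed simp

lemma A0: "A 0 m = {[]}"
proof -
  have "av []" unfolding av_def by simp
  then show ?thesis unfolding A_def multiperms_def by auto
qed

definition gmap :: "nat \<Rightarrow> nat \<Rightarrow> nat list \<times> nat \<Rightarrow> nat list" where
  "gmap n m = (\<lambda>(u,k). replicate (m-1) n @ take k u @ n # drop k u)"

lemma A_notin: "u \<in> A (n-1) m \<Longrightarrow> n \<ge> 1 \<Longrightarrow> n \<notin> set u"
proof
  assume "u \<in> A (n-1) m" "n \<ge> 1" "n \<in> set u"
  then have "n \<in> {1..n-1}" unfolding A_def multiperms_def by blast
  then show False by auto
qed

lemma A_img:
  assumes n: "n \<ge> 1" and m: "m \<ge> 2"
  shows "A n m = gmap n m ` (SIGMA u:A (n-1) m. K u)"
proof
  show "A n m \<subseteq> gmap n m ` (SIGMA u:A (n-1) m. K u)"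
  proof
    fix w assume w: "w \<in> A n m"
    obtain x y where wx: "w = replicate (m-1) n @ x @ n # y" and xy: "x @ y \<in> A (n-1) m"
      and so: "sorted x" using char_dest[OF n m w] by blast
    have "length x \<in> K (x @ y)" unfolding K_def using so by simp
    then have "(x @ y, length x) \<in> (SIGMA u:A (n-1) m. K u)" using xy by blast
    moreover have "w = gmap n m (x @ y, length x)" unfolding gmap_def wx by simp
    ultimately show "w \<in> gmap n m ` (SIGMA u:A (n-1) m. K u)" by blast
  qed
next
  show "gmap n m ` (SIGMA u:A (n-1) m. K u) \<subseteq> A n m"
  proof
    fix w assume "w \<in> gmap n m ` (SIGMA u:A (n-1) m. K u)"
    then obtain u k where u: "u \<in> A (n-1) m" and k: "k \<in> K u" and w: "w = gmap n m (u,k)" by blast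
    have "take k u @ drop k u \<in> A (n-1) m" using u by simp
    moreover have "sorted (take k u)" using k unfolding K_def by blast
    moreover have "m \<ge> 1" using m by simp
    ultimately have "replicate (m-1) n @ take k u @ n # drop k u \<in> A n m"
      using char_intro n by blast
    then show "w \<in> A n m" unfolding w gmap_def by simp
  qed
qed

lemma g_inj:
  assumes n: "n \<ge> 1"
  shows "inj_on (gmap n m) (SIGMA u:A (n-1) m. K u)"
proof (rule inj_onI)
  fix p q assume p: "p \<in> (SIGMA u:A (n-1) m. K u)" and q: "q \<in> (SIGMA u:A (n-1) m. K u)"
    and e: "gmap n m p = gmap n m q"
  obtain u k where pu: "p = (u,k)" by (cases p)
  obtain u' k' where qu: "q = (u',k')" by (cases q)
  have u: "u \<in> A (n-1) m" "k \<in> K u" using p pu by auto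
  have u': "u' \<in> A (n-1) m" "k' \<in> K u'" using q qu by auto
  have nu: "n \<notin> set u" "n \<notin> set u'" using A_notin u(1) u'(1) n by auto
  have kl: "k \<le> length u" "k' \<le> length u'" using u(2) u'(2) unfolding K_def by auto
  have "take k u @ n # drop k u = take k' u' @ n # drop k' u'"
    using e unfolding pu qu gmap_def by simp
  moreover have "n \<notin> set (take k u)" "n \<notin> set (drop k u)"
    using nu(1) by (meson in_set_takeD in_set_dropD)+
  moreover have "n \<notin> set (take k' u')"
    using nu(2) by (meson in_set_takeD)
  ultimately have tt: "take k u = take k' u'" and dd: "drop k u = drop k' u'"
    using append_Cons_eq_iff by metis+
  have "u = u'" by (metis append_take_drop_id tt dd)
  moreover have "k = k'" using tt kl \<open>u = u'\<close> by (metis length_take min_absorb2)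
  ultimately show "p = q" using pu qu by simp
qed

lemma card_A:
  assumes n: "n \<ge> 1" and m: "m \<ge> 2"
  shows "card (A n m) = (\<Sum>u\<in>A (n-1) m. card (K u))"
proof -
  have "card (A n m) = card (SIGMA u:A (n-1) m. K u)"
    unfolding A_img[OF n m] by (rule card_image[OF g_inj[OF n]])
  also have "\<dots> = (\<Sum>u\<in>A (n-1) m. card (K u))"
    by (rule card_SigmaI) (auto simp: A_finite K_finite)
  finally show ?thesis .
qed

lemma card_K:
  assumes p: "p \<ge> 1" and m: "m \<ge> 2" and u: "u \<in> A p m"
  shows "card (K u) = m + (if take m u = replicate m p then 1 else 0)"
  unfolding K_val[OF p m u] by auto

lemma top_set:
  assumes p: "p \<ge> 1" and m: "m \<ge> 2"
  shows "{u \<in> A p m. take m u = replicate m p} = (\<lambda>v. replicate m p @ v) ` A (p-1) m"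
proof
  show "{u \<in> A p m. take m u = replicate m p} \<subseteq> (\<lambda>v. replicate m p @ v) ` A (p-1) m"
  proof
    fix u assume "u \<in> {u \<in> A p m. take m u = replicate m p}"
    then have u: "u \<in> A p m" and tk: "take m u = replicate m p" by auto
    obtain x y where ux: "u = replicate (m-1) p @ x @ p # y" and xy: "x @ y \<in> A (p-1) m"
      using char_dest[OF p m u] by blast
    obtain m' where m': "m = Suc m'" using m by (cases m) auto
    have "p \<notin> set (x @ y)" using A_notin[OF xy] p by simp
    have x0: "x = []"
    proof (cases x)
      case (Cons a x')
      then have "take m u = replicate m' p @ [a]" using ux m' by simp
      moreover have "replicate m p = replicate m' p @ [p]" using m' by (simp add: replicate_append_same)
      ultimately have "a = p" using tk by simp
      then show ?thesis using Cons \<open>p \<notin> set (x @ y)\<close> by simp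
    qed simp
    then have "u = replicate m p @ y" using ux m' by (simp add: replicate_app_Cons_same)
    moreover have "y \<in> A (p-1) m" using xy x0 by simp
    ultimately show "u \<in> (\<lambda>v. replicate m p @ v) ` A (p-1) m" by blast
  qed
next
  show "(\<lambda>v. replicate m p @ v) ` A (p-1) m \<subseteq> {u \<in> A p m. take m u = replicate m p}"
  proof
    fix u assume "u \<in> (\<lambda>v. replicate m p @ v) ` A (p-1) m"
    then obtain v where v: "v \<in> A (p-1) m" and u: "u = replicate m p @ v" by blast
    have "[] @ v \<in> A (p-1) m" using v by simp
    moreover have "sorted ([]::nat list)" by simp
    moreover have "m \<ge> 1" using m by simp
    ultimately have "replicate (m-1) p @ [] @ p # v \<in> A p m"
      using char_intro[OF p] by blast
    moreover have "replicate (m-1) p @ [] @ p # v = u"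
      using u m by (cases m) (simp_all add: replicate_app_Cons_same)
    moreover have "take m u = replicate m p" using u by simp
    ultimately show "u \<in> {u \<in> A p m. take m u = replicate m p}" by simp
  qed
qed

lemma card_rec:
  assumes n: "n \<ge> 2" and m: "m \<ge> 2"
  shows "card (A n m) = m * card (A (n-1) m) + card (A (n-2) m)"
proof -
  have p: "n - 1 \<ge> 1" using n by simp
  have "card (A n m) = (\<Sum>u\<in>A (n-1) m. card (K u))" using card_A n m by simp
  also have "\<dots> = (\<Sum>u\<in>A (n-1) m. m + (if take m u = replicate m (n-1) then 1 else 0))"
    using card_K[OF p m] by simp
  also have "\<dots> = m * card (A (n-1) m) + card {u \<in> A (n-1) m. take m u = replicate m (n-1)}"
    by (simp add: sum.distrib sum.If_cases A_finite Int_def)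
  also have "{u \<in> A (n-1) m. take m u = replicate m (n-1)} = (\<lambda>v. replicate m (n-1) @ v) ` A (n-2) m"
    using top_set[OF p m] by (simp add: diff_diff_left numeral_2_eq_2)
  also have "card \<dots> = card (A (n-2) m)"
    by (rule card_image) (simp add: inj_on_def)
  finally show ?thesis .
qed

lemma s_count_A: "s_count n m {[1,2,2],[2,1,3]} = card (A n m)"
  unfolding s_count_def A_def avoids_av ..

theorem theorem6:
  fixes m :: nat
  assumes "m \<ge> 2"
  shows "s_count 1 m {[1,2,2],[2,1,3]} = 1
       \<and> s_count 2 m {[1,2,2],[2,1,3]} = m + 1
       \<and> (\<forall>n\<ge>3. s_count n m {[1,2,2],[2,1,3]} =
              m * s_count (n - 1) m {[1,2,2],[2,1,3]} + s_count (n - 2) m {[1,2,2],[2,1,3]})"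
proof -
  have K0: "K [] = {0}" unfolding K_def by auto
  have c1: "card (A 1 m) = 1" using card_A[of 1 m] assms by (simp add: A0 K0)
  have c2: "card (A 2 m) = m + 1" using card_rec[of 2 m] assms c1 by (simp add: A0)
  show ?thesis unfolding s_count_A using c1 c2 card_rec assms by simp
qed

end
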